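(* Let $n>d\ge 2$ be integers. For every connected graph $G$ with $n$ vertices and diameter $d$, $$\sigma_2(G)\le \binom{n-d}{2}d^2+2(n-d-1)d^2+d^3.$$
   Context: All graphs are finite, simple, undirected. For a connected graph $G$ and $u\in V(G)$, the eccentricity $\varepsilon_G(u)=\max_{v\in V(G)} d_G(u,v)$, where $d_G$ is the shortest-path distance; the diameter is $\max_u\varepsilon_G(u)$. The second Zagreb eccentricity index is $\sigma_2(G)=\sum_{uv\in E(G)}\varepsilon_G(u)\varepsilon_G(v)$. *)

theory Defs
  imports Main
begin

definition simple_graph :: "'a set \<Rightarrow> 'a set set \<Rightarrow> bool" where
  "simple_graph V E \<longleftrightarrow> finite V \<and> (\<forall>e\<in>E. e \<subseteq> V \<and> card e = 2)"

inductive walk_of_length :: "'a set set \<Rightarrow> nat \<Rightarrow> 'a \<Rightarrow> 'a \<Rightarrow> bool" for E where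
  walk_nil: "walk_of_length E 0 u u"
| walk_cons: "{u, w} \<in> E \<Longrightarrow> walk_of_length E k w v \<Longrightarrow> walk_of_length E (Suc k) u v"

definition connected_graph :: "'a set \<Rightarrow> 'a set set \<Rightarrow> bool" where
  "connected_graph V E \<longleftrightarrow> V \<noteq> {} \<and> (\<forall>u\<in>V. \<forall>v\<in>V. \<exists>k. walk_of_length E k u v)"

text \<open>Shortest-path distance (meaningful in a connected graph).\<close>
definition dist :: "'a set set \<Rightarrow> 'a \<Rightarrow> 'a \<Rightarrow> nat" where
  "dist E u v = (LEAST k. walk_of_length E k u v)"

definition ecc :: "'a set \<Rightarrow> 'a set set \<Rightarrow> 'a \<Rightarrow> nat" where
  "ecc V E u = Max ((\<lambda>v. dist E u v) ` V)"

definition diameter :: "'a set \<Rightarrow> 'a set set \<Rightarrow> nat" where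
  "diameter V E = Max ((\<lambda>u. ecc V E u) ` V)"

definition sigma2 :: "'a set \<Rightarrow> 'a set set \<Rightarrow> nat" where
  "sigma2 V E = (\<Sum>e\<in>E. \<Prod>x\<in>e. ecc V E x)"

end

theory Submission
  imports Defs
begin

lemma walk_append:
  "walk_of_length E a x y \<Longrightarrow> walk_of_length E b y z \<Longrightarrow> walk_of_length E (a+b) x z"
  by (induction rule: walk_of_length.induct) (auto intro: walk_of_length.intros)

lemma walk_edge: "{x,y} \<in> E \<Longrightarrow> walk_of_length E 1 x y"
  by (metis One_nat_def walk_of_length.intros)

lemma walk_sym: "walk_of_length E k u v \<Longrightarrow> walk_of_length E k v u"
proof (induction rule: walk_of_length.induct)
  case (walk_nil u) then show ?case by (rule walk_of_length.intros)
next
  case (walk_cons u w k v)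
  have "walk_of_length E 1 w u" using walk_cons(1) by (metis walk_edge insert_commute)
  from walk_append[OF walk_cons(3) this] show ?case by simp
qed

lemma walk_zero: "walk_of_length E 0 u v \<Longrightarrow> u = v"
  by (auto elim: walk_of_length.cases)

lemma walk_path:
  "walk_of_length E k u v \<Longrightarrow> \<exists>p. p 0 = u \<and> p k = v \<and> (\<forall>i<k. {p i, p (Suc i)} \<in> E)"
proof (induction rule: walk_of_length.induct)
  case (walk_nil u) then show ?case by (intro exI[of _ "\<lambda>_. u"]) auto
next
  case (walk_cons u w k v)
  then obtain p where p: "p 0 = w" "p k = v" "\<forall>i<k. {p i, p (Suc i)} \<in> E" by blast
  define q where "q i = (if i = 0 then u else p (i - 1))" for i
  have "\<forall>i<Suc k. {q i, q (Suc i)} \<in> E"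
  proof (intro allI impI)
    fix i assume "i < Suc k"
    then show "{q i, q (Suc i)} \<in> E"
      using p walk_cons(1) by (cases i) (auto simp: q_def)
  qed
  then show ?case using p by (intro exI[of _ q]) (auto simp: q_def)
qed

lemma path_walk:
  assumes "\<forall>i<k. {p i, p (Suc i)} \<in> E"
  shows "i + m \<le> k \<Longrightarrow> walk_of_length E m (p i) (p (i + m))"
proof (induction m)
  case 0 then show ?case by (simp add: walk_of_length.intros)
next
  case (Suc m)
  then have "walk_of_length E m (p i) (p (i + m))" by simp
  moreover have "walk_of_length E 1 (p (i+m)) (p (i + Suc m))"
    using assms Suc.prems by (intro walk_edge) auto
  ultimately show ?case using walk_append by fastforce
qed

lemma dist_le: "walk_of_length E k u v \<Longrightarrow> dist E u v \<le> k"
  unfolding dist_def by (rule Least_le)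

lemma dist_walk: "walk_of_length E k u v \<Longrightarrow> walk_of_length E (dist E u v) u v"
  unfolding dist_def by (rule LeastI)

lemma dist_tri:
  assumes "walk_of_length E a u v" "walk_of_length E b v w"
  shows "dist E u w \<le> dist E u v + dist E v w"
  using walk_append[OF dist_walk[OF assms(1)] dist_walk[OF assms(2)]] by (rule dist_le)

lemma dist_sym: "walk_of_length E k u v \<Longrightarrow> dist E u v = dist E v u"
  by (metis antisym dist_le dist_walk walk_sym)

lemma dist_edge: "{x,y} \<in> E \<Longrightarrow> dist E x y \<le> 1"
  by (metis dist_le walk_edge)

lemma dist_self: "dist E x x = 0"
  by (metis dist_le le_zero_eq walk_nil)

lemma dist_zero: "walk_of_length E k u v \<Longrightarrow> dist E u v = 0 \<Longrightarrow> u = v"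
  by (metis dist_walk walk_zero)

theorem theorem2p11:
  fixes V :: "'a set" and E :: "'a set set" and n d :: nat
  assumes "simple_graph V E" and "connected_graph V E"
    and "card V = n" and "diameter V E = d"
    and "2 \<le> d" and "d < n"
  shows "sigma2 V E \<le> ((n - d) choose 2) * d^2 + 2 * (n - d - 1) * d^2 + d^3"
proof -
  have finV: "finite V" and Ecard: "\<And>e. e \<in> E \<Longrightarrow> e \<subseteq> V \<and> card e = 2"
    using assms(1) unfolding simple_graph_def by auto
  have Vne: "V \<noteq> {}" and conn: "\<And>x y. x \<in> V \<Longrightarrow> y \<in> V \<Longrightarrow> \<exists>k. walk_of_length E k x y"
    using assms(2) unfolding connected_graph_def by auto
  have finE: "finite E"
    by (rule finite_subset[of _ "Pow V"]) (use Ecard finV in auto)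
  have ecc_le: "ecc V E x \<le> d" if "x \<in> V" for x
    using assms(4) finV that unfolding diameter_def by auto
  have dist_ecc: "dist E x y \<le> ecc V E x" if "y \<in> V" for x y
    using finV that unfolding ecc_def by auto
  have dist_d: "dist E x y \<le> d" if "x \<in> V" "y \<in> V" for x y
    using dist_ecc[OF that(2), of x] ecc_le[OF that(1)] by linarith
  have walk: "walk_of_length E (dist E x y) x y" if "x \<in> V" "y \<in> V" for x y
    by (metis conn[OF that] dist_walk)
  have tri: "dist E x z \<le> dist E x y + dist E y z" if "x \<in> V" "y \<in> V" "z \<in> V" for x y z
    by (rule dist_tri[OF walk[OF that(1,2)] walk[OF that(2,3)]])
  have "d \<in> (\<lambda>u. ecc V E u) ` V"
    using Max_in[of "(\<lambda>u. ecc V E u) ` V"] finV Vne assms(4) unfolding diameter_def by simp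
  then obtain u where u: "u \<in> V" "ecc V E u = d" by blast
  have "d \<in> (\<lambda>v. dist E u v) ` V"
    using Max_in[of "(\<lambda>v. dist E u v) ` V"] finV Vne u unfolding ecc_def by simp
  then obtain v where v: "v \<in> V" "dist E u v = d" by blast
  obtain p where p: "p 0 = u" "p d = v" "\<forall>i<d. {p i, p (Suc i)} \<in> E"
    using walk_path[OF walk[OF u(1) v(1)]] v(2) by auto
  have pV: "p i \<in> V" if "i \<le> d" for i
  proof (cases "i < d")
    case True then show ?thesis using p(3) Ecard by blast
  next
    case False then show ?thesis using that p(2) v(1) by auto
  qed
  have pw: "walk_of_length E (j - i) (p i) (p j)" if "i \<le> j" "j \<le> d" for i j
    using path_walk[OF p(3), of i "j - i"] that by simp
  have pdist: "dist E (p i) (p j) = j - i" if "i \<le> j" "j \<le> d" for i j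
  proof -
    have a: "dist E (p i) (p j) \<le> j - i" by (rule dist_le[OF pw[OF that]])
    have b: "dist E u (p i) \<le> i" using dist_le[OF pw[of 0 i]] that p(1) by simp
    have c: "dist E (p j) v \<le> d - j" using dist_le[OF pw[of j d]] that p(2) by simp
    have "d \<le> dist E u (p i) + dist E (p i) (p j) + dist E (p j) v"
      using tri[OF u(1) pV[of i] v(1)] tri[OF pV[of i] pV[of j] v(1)] v(2) that by linarith
    then show ?thesis using a b c that by linarith
  qed
  have pdist_sym: "dist E (p j) (p i) = j - i" if "i \<le> j" "j \<le> d" for i j
    using pdist[OF that] dist_sym[OF pw[OF that]] by linarith
  have injp: "inj_on p {0..d}"
  proof (rule inj_onI)
    fix i j assume ij: "i \<in> {0..d}" "j \<in> {0..d}" "p i = p j"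
    have z: "dist E (p i) (p j) = 0" using dist_self[of E "p i"] ij(3) by simp
    show "i = j"
    proof (cases "i \<le> j")
      case True then show ?thesis using pdist[of i j] z ij(2) by simp
    next
      case False then show ?thesis using pdist_sym[of j i] z ij(1) by simp
    qed
  qed
  define P where "P = p ` {0..d}"
  define W where "W = V - P"
  have PV: "P \<subseteq> V" using pV P_def by auto
  have cardP: "card P = d + 1" using injp P_def by (simp add: card_image)
  have finW: "finite W" using finV W_def by auto
  have cardW: "card W = n - d - 1"
    using card_Diff_subset[OF finite_subset[OF PV finV] PV] cardP assms(3) W_def by simp
  define E1 where "E1 = {e\<in>E. e \<subseteq> P}"
  define E2 where "E2 = {e\<in>E. e \<inter> W \<noteq> {} \<and> e \<inter> P \<noteq> {}}"
  define E3 where "E3 = {e\<in>E. e \<subseteq> W}"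
  have Esplit: "E = E1 \<union> E2 \<union> E3"
  proof
    show "E1 \<union> E2 \<union> E3 \<subseteq> E" unfolding E1_def E2_def E3_def by blast
    show "E \<subseteq> E1 \<union> E2 \<union> E3"
    proof
      fix e assume e: "e \<in> E"
      have eV: "e \<subseteq> P \<union> W" using Ecard[OF e] unfolding W_def by blast
      show "e \<in> E1 \<union> E2 \<union> E3"
      proof (cases "e \<subseteq> P")
        case True then show ?thesis using e unfolding E1_def by blast
      next
        case nP: False
        show ?thesis
        proof (cases "e \<subseteq> W")
          case True then show ?thesis using e unfolding E3_def by blast
        next
          case False
          then have "e \<inter> P \<noteq> {}" using eV by blast
          moreover have "e \<inter> W \<noteq> {}" using nP eV by blast
          ultimately show ?thesis using e unfolding E2_def by blast
        qed
      qed
    qed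
  qed
  have E1le: "card E1 \<le> d"
  proof -
    have "E1 \<subseteq> (\<lambda>i. {p i, p (Suc i)}) ` {..<d}"
    proof
      fix e assume e: "e \<in> E1"
      then obtain a b where ab: "e = {a,b}" "a \<noteq> b" "e \<in> E"
        using Ecard unfolding E1_def card_2_iff by blast
      then obtain i j where ij: "a = p i" "b = p j" "i \<le> d" "j \<le> d"
        using e unfolding E1_def P_def by auto
      have d1: "dist E (p i) (p j) \<le> 1" "dist E (p j) (p i) \<le> 1"
        using dist_edge ab ij by (metis, metis insert_commute)
      show "e \<in> (\<lambda>i. {p i, p (Suc i)}) ` {..<d}"
      proof (cases "i < j")
        case True
        then have "j = Suc i" using pdist[of i j] d1 ij by simp
        then show ?thesis using ab ij by auto
      next
        case False
        then have "j < i" using ab ij by (metis nat_neq_iff)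
        then have "i = Suc j" using pdist[of j i] d1 ij by simp
        then show ?thesis using ab ij \<open>j < i\<close> by (auto simp: insert_commute)
      qed
    qed
    then have "card E1 \<le> card ((\<lambda>i. {p i, p (Suc i)}) ` {..<d})" by (intro card_mono) auto
    also have "\<dots> \<le> card {..<d}" by (rule card_image_le) simp
    finally show ?thesis by simp
  qed
  have E3le: "card E3 \<le> card W choose 2"
  proof -
    have "E3 \<subseteq> {B. B \<subseteq> W \<and> card B = 2}" using Ecard unfolding E3_def by auto
    then have "card E3 \<le> card {B. B \<subseteq> W \<and> card B = 2}"
      by (intro card_mono) (simp_all add: finW)
    then show ?thesis using n_subsets[OF finW, of 2] by simp
  qed
  have nb: "card {y\<in>P. {x,y} \<in> E} \<le> 3" if x: "x \<in> W" for x
  proof -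
    define S where "S = {i\<in>{0..d}. {x, p i} \<in> E}"
    have sub: "{y\<in>P. {x,y} \<in> E} \<subseteq> p ` S" unfolding S_def P_def by auto
    have "card S \<le> 3"
    proof (cases "S = {}")
      case True then show ?thesis by simp
    next
      case False
      have finS: "finite S" unfolding S_def by auto
      define m where "m = Min S"
      have mS: "m \<in> S" using Min_in[OF finS False] m_def by simp
      have xV: "x \<in> V" using x W_def by auto
      have "S \<subseteq> {m..m+2}"
      proof
        fix j assume jS: "j \<in> S"
        have "m \<le> j" using jS finS m_def by simp
        have "dist E (p m) (p j) \<le> dist E (p m) x + dist E x (p j)"
          using tri[OF pV xV pV] mS jS S_def by auto
        moreover have "dist E (p m) x \<le> 1"
          using mS S_def dist_edge[of "p m" x E] by (auto simp: insert_commute)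
        moreover have "dist E x (p j) \<le> 1"
          using jS S_def dist_edge[of x "p j" E] by auto
        ultimately show "j \<in> {m..m+2}" using pdist[of m j] \<open>m \<le> j\<close> jS S_def by auto
      qed
      then have "card S \<le> card {m..m+2}" by (intro card_mono) auto
      then show ?thesis by simp
    qed
    moreover have "card {y\<in>P. {x,y} \<in> E} \<le> card (p ` S)"
      using sub by (intro card_mono) (auto simp: S_def)
    moreover have "card (p ` S) \<le> card S" by (rule card_image_le) (simp add: S_def)
    ultimately show ?thesis by linarith
  qed
  have E2le: "card E2 \<le> 3 * card W"
  proof -
    have "E2 \<subseteq> (\<Union>x\<in>W. (\<lambda>y. {x,y}) ` {y\<in>P. {x,y} \<in> E})"
    proof
      fix e assume e: "e \<in> E2"
      then obtain a b where ab: "e = {a,b}" "a \<noteq> b" "e \<in> E"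
        using Ecard unfolding E2_def card_2_iff by blast
      have "a \<in> W \<and> b \<in> P \<or> b \<in> W \<and> a \<in> P"
        using e ab unfolding E2_def W_def by auto
      then show "e \<in> (\<Union>x\<in>W. (\<lambda>y. {x,y}) ` {y\<in>P. {x,y} \<in> E})"
      proof
        assume "a \<in> W \<and> b \<in> P" then show ?thesis using ab by blast
      next
        assume h: "b \<in> W \<and> a \<in> P"
        have "{b,a} \<in> E" "e = {b,a}" using ab by (auto simp: insert_commute)
        then show ?thesis using h by blast
      qed
    qed
    then have "card E2 \<le> card (\<Union>x\<in>W. (\<lambda>y. {x,y}) ` {y\<in>P. {x,y} \<in> E})"
      using finW PV finV by (intro card_mono) (auto intro: finite_subset)
    also have "\<dots> \<le> (\<Sum>x\<in>W. card ((\<lambda>y. {x,y}) ` {y\<in>P. {x,y} \<in> E}))"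
      using finW by (rule card_UN_le)
    also have "\<dots> \<le> (\<Sum>x\<in>W. 3)"
    proof (rule sum_mono)
      fix x assume "x \<in> W"
      have "finite {y\<in>P. {x,y} \<in> E}" using PV finV by (auto intro: finite_subset)
      then show "card ((\<lambda>y. {x,y}) ` {y\<in>P. {x,y} \<in> E}) \<le> 3"
        using card_image_le nb[OF \<open>x \<in> W\<close>] order_trans by blast
    qed
    finally show ?thesis by simp
  qed
  have cardE: "card E \<le> d + 3 * (n - d - 1) + ((n - d - 1) choose 2)"
  proof -
    have "card E \<le> card E1 + card E2 + card E3"
      unfolding Esplit using card_Un_le[of "E1 \<union> E2" E3] card_Un_le[of E1 E2] by linarith
    then show ?thesis using E1le E2le E3le unfolding cardW by linarith
  qed
  have "sigma2 V E \<le> card E * (d * d)"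
    unfolding sigma2_def
  proof (rule sum_bounded_above[where K="d*d", simplified])
    fix e assume e: "e \<in> E"
    then obtain a b where ab: "e = {a,b}" "a \<noteq> b" using Ecard card_2_iff by metis
    then have "a \<in> V" "b \<in> V" using Ecard e by auto
    then show "(\<Prod>x\<in>e. ecc V E x) \<le> d * d" using ab ecc_le by (simp add: mult_le_mono)
  qed
  also have "\<dots> \<le> (d + 3 * (n - d - 1) + ((n - d - 1) choose 2)) * (d * d)"
    using cardE by simp
  also have "\<dots> = ((n - d) choose 2) * d^2 + 2 * (n - d - 1) * d^2 + d^3"
  proof -
    obtain w where w: "n - d = Suc w" using assms(6) by (metis Suc_diff_Suc)
    have "Suc w choose 2 = (w choose 2) + w"
      by (simp add: numeral_2_eq_2)
    then show ?thesis using w by (simp add: power2_eq_square power3_eq_cube algebra_simps)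
  qed
  finally show ?thesis .
qed

end
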